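(* Let $n,d,J$ be positive integers with $n\geqslant d\geqslant2$, and let $\delta,\vartheta>0$. For every $j\in[J]$ let $\boldsymbol{X}_j=\langle X^j_s:s\in\binom{[n]}{d}\rangle$ be a boolean, spreadable, $d$-dimensional random array on $[n]$ which is $(\vartheta,\{1\})$-box independent and satisfies $|\mathbb{E}[X^j_s]-\delta|\leqslant\vartheta$ for all $s\in\binom{[n]}{d}$. If $\boldsymbol{X}$ is any mixture of $\boldsymbol{X}_1,\dots,\boldsymbol{X}_J$, then $\boldsymbol{X}$ is $(2^{d+2}\vartheta,\{1\})$-box independent.
   Context: $[n]=\{1,\dots,n\}$, $\binom{I}{d}$ is the set of $d$-element subsets of $I$. A random array is spreadable if for all $J,K\subseteq[n]$ with $|J|=|K|\geqslant d$, the subarrays $\langle X_s:s\in\binom{J}{d}\rangle$ and $\langle X_s:s\in\binom{K}{d}\rangle$ have the same law (identified via the increasing bijection $J\to K$). A mixture of $\boldsymbol{X}_1,\dots,\boldsymbol{X}_J$ is a boolean $d$-dimensional random array $\boldsymbol{X}=\langle X_s:s\in\binom{[n]}{d}\rangle$ such that for some convex coefficients $\lambda_1,\dots,\lambda_J$, $\mathbb{E}[\prod_{s\in\mathcal{F}}X_s]=\sum_{j=1}^J\lambda_j\mathbb{E}[\prod_{s\in\mathcal{F}}X^j_s]$ for every nonempty $\mathcal{F}\subseteq\binom{[n]}{d}$. A $d$-dimensional box of $[n]$ is $\{s\in\binom{[n]}{d}:|s\cap H_i|=1\ \forall i\in[d]\}$ for 2-element sets $H_1,\dots,H_d\subseteq[n]$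 with $\max(H_i)<\min(H_{i+1})$. A boolean array $\boldsymbol{X}$ is $(\vartheta,\{1\})$-box independent if for every $d$-dimensional box $B$ of $[n]$, $\mathbb{P}(\bigcap_{s\in B}[X_s=1])\leqslant\prod_{s\in B}\mathbb{P}([X_s=1])+\vartheta$ (vacuous if there is no such box). *)

theory Defs
  imports "HOL-Probability.Probability"
begin

definition subsets_card :: "nat set \<Rightarrow> nat \<Rightarrow> nat set set" where
  "subsets_card I d = {s. s \<subseteq> I \<and> card s = d}"

definition bool_array :: "'a measure \<Rightarrow> nat \<Rightarrow> nat \<Rightarrow> (nat set \<Rightarrow> 'a \<Rightarrow> bool) \<Rightarrow> bool" where
  "bool_array M n d X \<longleftrightarrow> prob_space M \<and>
     (\<forall>s \<in> subsets_card {1..n} d. X s \<in> M \<rightarrow>\<^sub>M count_space UNIV)"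

definition spreadable :: "'a measure \<Rightarrow> nat \<Rightarrow> nat \<Rightarrow> (nat set \<Rightarrow> 'a \<Rightarrow> bool) \<Rightarrow> bool" where
  "spreadable M n d X \<longleftrightarrow>
     (\<forall>J K (\<phi>::nat \<Rightarrow> nat). J \<subseteq> {1..n} \<and> K \<subseteq> {1..n} \<and> card J = card K \<and> d \<le> card J
        \<and> bij_betw \<phi> J K \<and> strict_mono_on J \<phi> \<longrightarrow>
        distr M (PiM (subsets_card J d) (\<lambda>_. count_space UNIV))
               (\<lambda>\<omega>. \<lambda>s \<in> subsets_card J d. X s \<omega>)
      = distr M (PiM (subsets_card J d) (\<lambda>_. count_space UNIV))
               (\<lambda>\<omega>. \<lambda>s \<in> subsets_card J d. X (\<phi> ` s) \<omega>))"

definition box_sets :: "nat \<Rightarrow> nat \<Rightarrow> (nat \<Rightarrow> nat set) \<Rightarrow> bool" where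
  "box_sets n d H \<longleftrightarrow>
     (\<forall>i \<in> {1..d}. H i \<subseteq> {1..n} \<and> card (H i) = 2) \<and>
     (\<forall>i \<in> {1..<d}. Max (H i) < Min (H (Suc i)))"

definition box :: "nat \<Rightarrow> nat \<Rightarrow> (nat \<Rightarrow> nat set) \<Rightarrow> nat set set" where
  "box n d H = {s \<in> subsets_card {1..n} d. \<forall>i \<in> {1..d}. card (s \<inter> H i) = 1}"

definition is_box :: "nat \<Rightarrow> nat \<Rightarrow> nat set set \<Rightarrow> bool" where
  "is_box n d B \<longleftrightarrow> (\<exists>H. box_sets n d H \<and> B = box n d H)"

definition box_indep :: "'a measure \<Rightarrow> nat \<Rightarrow> nat \<Rightarrow> (nat set \<Rightarrow> 'a \<Rightarrow> bool) \<Rightarrow> real \<Rightarrow> bool" where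
  "box_indep M n d X \<theta> \<longleftrightarrow>
     (\<forall>B. is_box n d B \<longrightarrow>
        measure M {\<omega> \<in> space M. \<forall>s \<in> B. X s \<omega>}
          \<le> (\<Prod>s \<in> B. measure M {\<omega> \<in> space M. X s \<omega>}) + \<theta>)"

definition is_mixture ::
  "'b measure \<Rightarrow> nat \<Rightarrow> nat \<Rightarrow> (nat set \<Rightarrow> 'b \<Rightarrow> bool) \<Rightarrow> nat
     \<Rightarrow> (nat \<Rightarrow> 'a measure) \<Rightarrow> (nat \<Rightarrow> nat set \<Rightarrow> 'a \<Rightarrow> bool) \<Rightarrow> bool" where
  "is_mixture M n d X J Ms Xs \<longleftrightarrow>
     (\<exists>c::nat \<Rightarrow> real. (\<forall>j \<in> {1..J}. 0 \<le> c j) \<and> (\<Sum>j = 1..J. c j) = 1 \<and>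
        (\<forall>F. F \<noteq> {} \<and> F \<subseteq> subsets_card {1..n} d \<longrightarrow>
           (\<integral>\<omega>. (\<Prod>s \<in> F. of_bool (X s \<omega>)) \<partial>M)
             = (\<Sum>j = 1..J. c j * (\<integral>\<omega>. (\<Prod>s \<in> F. of_bool (Xs j s \<omega>)) \<partial>Ms j))))"

end

theory Submission
  imports Defs
begin

lemma prod_of_bool_real: "finite A \<Longrightarrow> (\<Prod>i\<in>A. of_bool (P i) :: real) = of_bool (\<forall>i\<in>A. P i)"
  by (induction A rule: finite_induct) auto

lemma int_prod_meas:
  assumes "finite F"
  shows "(\<integral>\<omega>. (\<Prod>s\<in>F. of_bool (f s \<omega>) :: real) \<partial>N) = measure N {\<omega>\<in>space N. \<forall>s\<in>F. f s \<omega>}"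
proof -
  have "(\<integral>\<omega>. (\<Prod>s\<in>F. of_bool (f s \<omega>) :: real) \<partial>N) = integral\<^sup>L N (indicator {\<omega>\<in>space N. \<forall>s\<in>F. f s \<omega>})"
    by (rule Bochner_Integration.integral_cong) (auto simp: prod_of_bool_real[OF assms] indicator_def)
  also have "\<dots> = measure N {\<omega>\<in>space N. \<forall>s\<in>F. f s \<omega>}"
    by (simp add: Int_absorb2 subset_eq)
  finally show ?thesis .
qed

lemma int_one_meas:
  "(\<integral>\<omega>. (of_bool (f \<omega>) :: real) \<partial>N) = measure N {\<omega>\<in>space N. f \<omega>}"
  using int_prod_meas[where F="{undefined}" and f="\<lambda>_. f" and N=N] by simp

lemma prod_diff_le:
  fixes a b :: "'i \<Rightarrow> real"
  assumes "finite I" "\<And>i. i \<in> I \<Longrightarrow> 0 \<le> a i \<and> a i \<le> 1" "\<And>i. i \<in> I \<Longrightarrow> 0 \<le> b i \<and> b i \<le> 1"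
  shows "(\<Prod>i\<in>I. a i) - (\<Prod>i\<in>I. b i) \<le> (\<Sum>i\<in>I. \<bar>a i - b i\<bar>)"
  using assms
proof (induction I rule: finite_induct)
  case empty
  then show ?case by simp
next
  case (insert x F)
  have a: "0 \<le> a x" "a x \<le> 1" and b: "0 \<le> b x" "b x \<le> 1" using insert.prems by auto
  have pa: "0 \<le> (\<Prod>i\<in>F. a i)" "(\<Prod>i\<in>F. a i) \<le> 1"
    using insert.prems by (auto intro!: prod_nonneg prod_le_1)
  have pb: "0 \<le> (\<Prod>i\<in>F. b i)" "(\<Prod>i\<in>F. b i) \<le> 1"
    using insert.prems by (auto intro!: prod_nonneg prod_le_1)
  have IH: "(\<Prod>i\<in>F. a i) - (\<Prod>i\<in>F. b i) \<le> (\<Sum>i\<in>F. \<bar>a i - b i\<bar>)"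
    using insert by auto
  have "a x * (\<Prod>i\<in>F. a i) - b x * (\<Prod>i\<in>F. b i)
      = a x * ((\<Prod>i\<in>F. a i) - (\<Prod>i\<in>F. b i)) + (a x - b x) * (\<Prod>i\<in>F. b i)"
    by (simp add: algebra_simps)
  also have "\<dots> \<le> (\<Sum>i\<in>F. \<bar>a i - b i\<bar>) + \<bar>a x - b x\<bar>"
  proof (rule add_mono)
    show "a x * ((\<Prod>i\<in>F. a i) - (\<Prod>i\<in>F. b i)) \<le> (\<Sum>i\<in>F. \<bar>a i - b i\<bar>)"
    proof (cases "(\<Prod>i\<in>F. a i) - (\<Prod>i\<in>F. b i) \<ge> 0")
      case True
      then have "a x * ((\<Prod>i\<in>F. a i) - (\<Prod>i\<in>F. b i)) \<le> 1 * ((\<Prod>i\<in>F. a i) - (\<Prod>i\<in>F. b i))"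
        using a by (intro mult_right_mono) auto
      then show ?thesis using IH by simp
    next
      case False
      then have "a x * ((\<Prod>i\<in>F. a i) - (\<Prod>i\<in>F. b i)) \<le> 0"
        using a by (simp add: mult_nonneg_nonpos)
      moreover have "0 \<le> (\<Sum>i\<in>F. \<bar>a i - b i\<bar>)" by (rule sum_nonneg) simp
      ultimately show ?thesis by linarith
    qed
    show "(a x - b x) * (\<Prod>i\<in>F. b i) \<le> \<bar>a x - b x\<bar>"
    proof -
      have "(a x - b x) * (\<Prod>i\<in>F. b i) \<le> \<bar>a x - b x\<bar> * (\<Prod>i\<in>F. b i)"
        using pb by (intro mult_right_mono) auto
      also have "\<dots> \<le> \<bar>a x - b x\<bar> * 1" using pb by (intro mult_left_mono) auto
      finally show ?thesis by simp
    qed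
  qed
  finally show ?case using insert.hyps by (simp add: add.commute)
qed

lemma box_disj:
  assumes "box_sets n d H" "i \<in> {1..d}" "j \<in> {1..d}" "i < j"
  shows "Max (H i) < Min (H j)"
  using assms(3,4)
proof (induction j)
  case 0
  then show ?case by simp
next
  case (Suc j)
  have hi: "\<forall>i \<in> {1..<d}. Max (H i) < Min (H (Suc i))" using assms(1) unfolding box_sets_def by auto
  show ?case
  proof (cases "i = j")
    case True
    then show ?thesis using hi Suc.prems assms(2) by auto
  next
    case False
    then have ij: "i < j" using Suc.prems by simp
    have jd: "j \<in> {1..d}" using ij assms(2) Suc.prems by auto
    have "card (H j) = 2" using assms(1) jd unfolding box_sets_def by auto
    then have "finite (H j)" "H j \<noteq> {}" using card_gt_0_iff by fastforce+
    then have "Min (H j) \<le> Max (H j)" by simp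
    moreover have "Max (H i) < Min (H j)" using Suc.IH jd ij by auto
    moreover have "Max (H j) < Min (H (Suc j))" using hi jd Suc.prems by auto
    ultimately show ?thesis by linarith
  qed
qed

lemma box_disj2:
  assumes "box_sets n d H" "i \<in> {1..d}" "j \<in> {1..d}" "i \<noteq> j"
  shows "H i \<inter> H j = {}"
proof -
  have fi: "finite (H i)" "finite (H j)" using assms(1-3) unfolding box_sets_def
    by (metis card.infinite zero_neq_numeral)+
  show ?thesis
  proof (cases "i < j")
    case True
    have "Max (H i) < Min (H j)" using box_disj[OF assms(1-3) True] .
    then show ?thesis using fi by (meson Max_ge Min_le disjoint_iff not_le order.strict_trans1)
  next
    case False
    then have "j < i" using assms(4) by simp
    have "Max (H j) < Min (H i)" using box_disj[OF assms(1) assms(3) assms(2) \<open>j < i\<close>] .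
    then show ?thesis using fi by (meson Max_ge Min_le disjoint_iff not_le order.strict_trans1)
  qed
qed

lemma box_card:
  assumes "box_sets n d H"
  shows "card (box n d H) \<le> 2 ^ d"
proof -
  let ?P = "PiE {1..d} (\<lambda>i. (\<lambda>x. {x}) ` H i)"
  let ?f = "\<lambda>s. \<lambda>i\<in>{1..d}. s \<inter> H i"
  have card2: "\<And>i. i \<in> {1..d} \<Longrightarrow> card (H i) = 2" using assms unfolding box_sets_def by auto
  have fin: "\<And>i. i \<in> {1..d} \<Longrightarrow> finite (H i)" using card2 by (metis card.infinite zero_neq_numeral)
  have "inj_on ?f (box n d H)"
  proof (rule inj_onI)
    fix s t assume s: "s \<in> box n d H" and t: "t \<in> box n d H" and eq: "?f s = ?f t"
    have key: "u = (\<Union>i\<in>{1..d}. u \<inter> H i)" if u: "u \<in> box n d H" for u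
    proof -
      have uc: "finite u" "card u = d" "\<And>i. i\<in>{1..d} \<Longrightarrow> card (u \<inter> H i) = 1"
        using u unfolding box_def subsets_card_def by (auto intro: finite_subset)
      have "card (\<Union>i\<in>{1..d}. u \<inter> H i) = (\<Sum>i\<in>{1..d}. card (u \<inter> H i))"
        proof (rule card_UN_disjoint)
        show "\<forall>i\<in>{1..d}. \<forall>j\<in>{1..d}. i \<noteq> j \<longrightarrow> (u \<inter> H i) \<inter> (u \<inter> H j) = {}"
          proof (intro ballI impI)
          fix i j assume "i \<in> {1..d}" "j \<in> {1..d}" "i \<noteq> j"
          then have "H i \<inter> H j = {}" by (rule box_disj2[OF assms])
          then show "(u \<inter> H i) \<inter> (u \<inter> H j) = {}" by blast
        qed
      qed (use uc in auto)
      also have "\<dots> = d" using uc by simp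
      finally have "card (\<Union>i\<in>{1..d}. u \<inter> H i) = card u" using uc by simp
      then show ?thesis using uc by (intro card_subset_eq[symmetric]) auto
    qed
    have "\<And>i. i \<in> {1..d} \<Longrightarrow> s \<inter> H i = t \<inter> H i" using eq by (metis restrict_apply')
    then show "s = t" using key[OF s] key[OF t] by auto
  qed
  moreover have "?f ` box n d H \<subseteq> ?P"
  proof
    fix y assume "y \<in> ?f ` box n d H"
    then obtain s where s: "s \<in> box n d H" and y: "y = ?f s" by auto
    have "\<And>i. i \<in> {1..d} \<Longrightarrow> s \<inter> H i \<in> (\<lambda>x. {x}) ` H i"
    proof -
      fix i assume i: "i \<in> {1..d}"
      then have "card (s \<inter> H i) = 1" using s unfolding box_def by auto
      then obtain x where "s \<inter> H i = {x}" by (meson card_1_singletonE)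
      then show "s \<inter> H i \<in> (\<lambda>x. {x}) ` H i" by auto
    qed
    then show "y \<in> ?P" using y by auto
  qed
  moreover have "finite ?P" using fin by (intro finite_PiE) auto
  ultimately have "card (box n d H) \<le> card ?P" by (meson card_inj_on_le)
  also have "card ?P = (\<Prod>i\<in>{1..d}. card ((\<lambda>x. {x}) ` H i))" by (simp add: card_PiE)
  also have "\<dots> = (\<Prod>i\<in>{1..d}. 2)"
    by (rule prod.cong) (auto simp: card_image card2)
  also have "\<dots> = 2 ^ d" by simp
  finally show ?thesis .
qed

theorem proposition8p4:
  fixes n d J :: nat and \<delta> \<theta> :: real
    and Ms :: "nat \<Rightarrow> 'a measure" and Xs :: "nat \<Rightarrow> nat set \<Rightarrow> 'a \<Rightarrow> bool"
    and M :: "'b measure" and X :: "nat set \<Rightarrow> 'b \<Rightarrow> bool"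
  assumes "0 < J" and "2 \<le> d" and "d \<le> n" and "0 < \<delta>" and "0 < \<theta>"
    and "\<And>j. j \<in> {1..J} \<Longrightarrow> bool_array (Ms j) n d (Xs j)"
    and "\<And>j. j \<in> {1..J} \<Longrightarrow> spreadable (Ms j) n d (Xs j)"
    and "\<And>j. j \<in> {1..J} \<Longrightarrow> box_indep (Ms j) n d (Xs j) \<theta>"
    and "\<And>j s. j \<in> {1..J} \<Longrightarrow> s \<in> subsets_card {1..n} d \<Longrightarrow>
           \<bar>(\<integral>\<omega>. of_bool (Xs j s \<omega>) \<partial>Ms j) - \<delta>\<bar> \<le> \<theta>"
    and "bool_array M n d X"
    and "is_mixture M n d X J Ms Xs"
  shows "box_indep M n d X (2 ^ (d + 2) * \<theta>)"
  unfolding box_indep_def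
proof (intro allI impI)
  fix B assume bi: "is_box n d B"
  then obtain H where H: "box_sets n d H" "B = box n d H" unfolding is_box_def by auto
  have Bsub: "B \<subseteq> subsets_card {1..n} d" using H unfolding box_def by auto
  have finB: "finite B"
    by (rule finite_subset[OF Bsub]) (auto simp: subsets_card_def intro: finite_subset)
  have cardB: "card B \<le> 2 ^ d" using box_card[OF H(1)] H(2) by simp
  have PM: "prob_space M" using assms(10) unfolding bool_array_def by auto
  have PMs: "\<And>j. j \<in> {1..J} \<Longrightarrow> prob_space (Ms j)" using assms(6) unfolding bool_array_def by auto
  define q where "q s = measure M {\<omega>\<in>space M. X s \<omega>}" for s
  define p where "p j s = measure (Ms j) {\<omega>\<in>space (Ms j). Xs j s \<omega>}" for j s
  define P where "P j = measure (Ms j) {\<omega>\<in>space (Ms j). \<forall>s\<in>B. Xs j s \<omega>}" for j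
  have th2: "0 \<le> (2::real) ^ (d + 2) * \<theta>" using assms(5) by simp
  show "measure M {\<omega> \<in> space M. \<forall>s\<in>B. X s \<omega>} \<le> (\<Prod>s\<in>B. measure M {\<omega> \<in> space M. X s \<omega>}) + 2 ^ (d + 2) * \<theta>"
  proof (cases "B = {}")
    case True
    have "measure M {\<omega> \<in> space M. \<forall>s\<in>B. X s \<omega>} \<le> 1" using PM by (simp add: prob_space.prob_le_1)
    then show ?thesis using True th2 by (simp del: power_add power_Suc)
  next
    case False
    obtain c :: "nat \<Rightarrow> real" where c: "\<forall>j \<in> {1..J}. 0 \<le> c j" "(\<Sum>j = 1..J. c j) = 1"
      "\<forall>F. F \<noteq> {} \<and> F \<subseteq> subsets_card {1..n} d \<longrightarrow>
           (\<integral>\<omega>. (\<Prod>s \<in> F. of_bool (X s \<omega>)) \<partial>M)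
             = (\<Sum>j = 1..J. c j * (\<integral>\<omega>. (\<Prod>s \<in> F. of_bool (Xs j s \<omega>)) \<partial>Ms j))"
      using assms(11) unfolding is_mixture_def by (elim exE conjE) (rule that; assumption)
    have mix: "measure M {\<omega> \<in> space M. \<forall>s\<in>B. X s \<omega>} = (\<Sum>j = 1..J. c j * P j)"
      using c(3)[rule_format, OF conjI[OF False Bsub]] finB by (simp add: int_prod_meas P_def)
    have qmix: "q s = (\<Sum>j = 1..J. c j * p j s)" if "s \<in> B" for s
      using c(3)[rule_format, of "{s}"] that Bsub by (auto simp: q_def p_def int_one_meas)
    have pd: "\<bar>p j s - \<delta>\<bar> \<le> \<theta>" if "j \<in> {1..J}" "s \<in> B" for j s
      using assms(9)[of j s] that Bsub by (auto simp: p_def int_one_meas)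
    have p01: "0 \<le> p j s \<and> p j s \<le> 1" if "j \<in> {1..J}" for j s
      using PMs[OF that] by (simp add: p_def prob_space.prob_le_1)
    have q01: "0 \<le> q s \<and> q s \<le> 1" for s
      using PM by (simp add: q_def prob_space.prob_le_1)
    have qd: "\<bar>q s - \<delta>\<bar> \<le> \<theta>" if "s \<in> B" for s
    proof -
      have "q s - \<delta> = (\<Sum>j = 1..J. c j * (p j s - \<delta>))"
        using qmix[OF that] c(2) by (simp add: algebra_simps sum_subtractf sum_distrib_left[symmetric])
      also have "\<bar>\<dots>\<bar> \<le> (\<Sum>j = 1..J. \<bar>c j * (p j s - \<delta>)\<bar>)" by (rule sum_abs)
      also have "\<dots> \<le> (\<Sum>j = 1..J. c j * \<theta>)"
        using c(1) pd[OF _ that] by (intro sum_mono) (simp add: abs_mult mult_left_mono)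
      also have "\<dots> = \<theta>" using c(2) by (simp add: sum_distrib_right[symmetric])
      finally show ?thesis .
    qed
    have Pb: "P j \<le> (\<Prod>s\<in>B. p j s) + \<theta>" if "j \<in> {1..J}" for j
      using assms(8)[OF that, unfolded box_indep_def, rule_format, OF bi] unfolding P_def p_def .
    have pq: "(\<Prod>s\<in>B. p j s) \<le> (\<Prod>s\<in>B. q s) + 2 ^ (d+1) * \<theta>" if j: "j \<in> {1..J}" for j
    proof -
      have "(\<Prod>s\<in>B. p j s) - (\<Prod>s\<in>B. q s) \<le> (\<Sum>s\<in>B. \<bar>p j s - q s\<bar>)"
        using finB p01[OF j] q01 by (intro prod_diff_le) auto
      also have "\<dots> \<le> (\<Sum>s\<in>B. 2 * \<theta>)"
        proof (rule sum_mono)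
        fix s assume s: "s \<in> B"
        have "\<bar>p j s - \<delta>\<bar> \<le> \<theta>" "\<bar>q s - \<delta>\<bar> \<le> \<theta>" using pd[OF j s] qd[OF s] .
        then show "\<bar>p j s - q s\<bar> \<le> 2 * \<theta>" by linarith
      qed
      also have "\<dots> = real (card B) * (2 * \<theta>)" by simp
      also have "\<dots> \<le> 2 ^ d * (2 * \<theta>)"
        proof (rule mult_right_mono)
        show "real (card B) \<le> 2 ^ d" using of_nat_mono[OF cardB, where 'a=real] by simp
      qed (use assms(5) in simp)
      also have "\<dots> = 2 ^ (d+1) * \<theta>" by simp
      finally show ?thesis by simp
    qed
    have "(\<Sum>j = 1..J. c j * P j) \<le> (\<Sum>j = 1..J. c j * ((\<Prod>s\<in>B. q s) + 2 ^ (d+1) * \<theta> + \<theta>))"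
      proof (rule sum_mono)
      fix j assume j: "j \<in> {1..J}"
      have "P j \<le> (\<Prod>s\<in>B. q s) + 2 ^ (d+1) * \<theta> + \<theta>" using Pb[OF j] pq[OF j] by linarith
      then show "c j * P j \<le> c j * ((\<Prod>s\<in>B. q s) + 2 ^ (d+1) * \<theta> + \<theta>)"
        using c(1) j by (intro mult_left_mono) auto
    qed
    also have "\<dots> = (\<Prod>s\<in>B. q s) + 2 ^ (d+1) * \<theta> + \<theta>"
      using c(2) by (simp add: sum_distrib_right[symmetric])
    also have "\<dots> \<le> (\<Prod>s\<in>B. q s) + 2 ^ (d + 2) * \<theta>"
    proof -
      have "(1::real) \<le> 2 ^ (d+1)" using one_le_power[of "2::real" "d+1"] by simp
      then have "\<theta> \<le> 2 ^ (d+1) * \<theta>" using assms(5) by simp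
      moreover have "(2::real) ^ (d+2) = 2 ^ (d+1) + 2 ^ (d+1)" by simp
      ultimately show ?thesis by (simp add: distrib_right mult.commute mult.left_commute)
    qed
    finally show ?thesis using mix by (simp add: q_def)
  qed
qed

end
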